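(* For every hypergraph $\mathcal{H}$ we have $\tau_2(\mathcal{H})/2\le \mathrm{dec}(\mathcal{H})\le \tau_2(\mathcal{H})-1$, and both bounds are tight (each holds with equality for some hypergraphs). In particular, $\tau_2(\mathcal{H})$ is a 2-approximation for $\mathrm{dec}(\mathcal{H})$.
   Context: A hypergraph $\mathcal{H}=(X,\mathcal{E})$ has a finite vertex set $X$, $|X|=n$, and a family of edges, each a subset of $X$ with at least 2 vertices. A C-coloring is a map $\varphi:X\to\mathbb{N}$ such that every edge contains two distinct vertices of the same color; $\overline{\chi}(\mathcal{H})$ is the maximum number of colors used by a C-coloring and $\mathrm{dec}(\mathcal{H})=n-\overline{\chi}(\mathcal{H})$. $\tau_2(\mathcal{H})$ is the minimum size of a set $T\subseteq X$ with $|E\cap T|\ge2$ for every edge $E$. *)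

theory Defs
  imports Complex_Main
begin

definition hypergraph :: "'a set \<Rightarrow> 'a set set \<Rightarrow> bool" where
  "hypergraph X E \<longleftrightarrow> finite X \<and> E \<noteq> {} \<and> (\<forall>e\<in>E. e \<subseteq> X \<and> card e \<ge> 2)"

definition C_coloring :: "'a set set \<Rightarrow> ('a \<Rightarrow> nat) \<Rightarrow> bool" where
  "C_coloring E \<phi> \<longleftrightarrow> (\<forall>e\<in>E. \<exists>x\<in>e. \<exists>y\<in>e. x \<noteq> y \<and> \<phi> x = \<phi> y)"

definition upper_chi :: "'a set \<Rightarrow> 'a set set \<Rightarrow> nat" where
  "upper_chi X E = Max {card (\<phi> ` X) | \<phi>. C_coloring E \<phi>}"

definition dec :: "'a set \<Rightarrow> 'a set set \<Rightarrow> nat" where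
  "dec X E = card X - upper_chi X E"

definition tau2 :: "'a set \<Rightarrow> 'a set set \<Rightarrow> nat" where
  "tau2 X E = Min {card T | T. T \<subseteq> X \<and> (\<forall>e\<in>E. card (e \<inter> T) \<ge> 2)}"

end

theory Submission
  imports Defs
begin

lemma chi_set:
  assumes h: "hypergraph X E"
  shows "finite {card (\<phi> ` X) | \<phi>. C_coloring E \<phi>}"
    "{card (\<phi> ` X) | \<phi>. C_coloring E \<phi>} \<noteq> {}"
proof -
  have fX: "finite X" using h by (simp add: hypergraph_def)
  have "{card (\<phi> ` X) | \<phi>. C_coloring E \<phi>} \<subseteq> {..card X}"
    using card_image_le[OF fX] by auto
  then show "finite {card (\<phi> ` X) | \<phi>. C_coloring E \<phi>}" using finite_subset by blast
  have "C_coloring E (\<lambda>_. 0)"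
  proof (unfold C_coloring_def, intro ballI)
    fix e assume "e \<in> E"
    then have "card e \<ge> 2" using h by (simp add: hypergraph_def)
    then obtain x y where "x \<in> e" "y \<in> e" "x \<noteq> y"
      by (metis card_2_iff' card_le_Suc_iff numeral_2_eq_2 insertCI)
    then show "\<exists>x\<in>e. \<exists>y\<in>e. x \<noteq> y \<and> (0::nat) = 0" by blast
  qed
  then show "{card (\<phi> ` X) | \<phi>. C_coloring E \<phi>} \<noteq> {}" by blast
qed

lemma tau_set:
  assumes h: "hypergraph X E"
  shows "finite {card T | T. T \<subseteq> X \<and> (\<forall>e\<in>E. card (e \<inter> T) \<ge> 2)}"
    "{card T | T. T \<subseteq> X \<and> (\<forall>e\<in>E. card (e \<inter> T) \<ge> 2)} \<noteq> {}"
proof -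
  have fX: "finite X" using h by (simp add: hypergraph_def)
  have "{card T | T. T \<subseteq> X \<and> (\<forall>e\<in>E. card (e \<inter> T) \<ge> 2)} \<subseteq> {..card X}"
    using card_mono[OF fX] by auto
  then show "finite {card T | T. T \<subseteq> X \<and> (\<forall>e\<in>E. card (e \<inter> T) \<ge> 2)}"
    using finite_subset by blast
  have "\<forall>e\<in>E. card (e \<inter> X) \<ge> 2" using h by (auto simp: hypergraph_def Int_absorb2)
  then show "{card T | T. T \<subseteq> X \<and> (\<forall>e\<in>E. card (e \<inter> T) \<ge> 2)} \<noteq> {}" by blast
qed

lemma lower:
  assumes h: "hypergraph X E"
  shows "tau2 X E \<le> 2 * dec X E"
proof -
  have fX: "finite X" using h by (simp add: hypergraph_def)
  obtain \<phi> where phi: "C_coloring E \<phi>" and chi: "upper_chi X E = card (\<phi> ` X)"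
    using Max_in[OF chi_set[OF h]] unfolding upper_chi_def by auto
  define T where "T = {x\<in>X. \<exists>y\<in>X. y \<noteq> x \<and> \<phi> y = \<phi> x}"
  have TX: "T \<subseteq> X" by (auto simp: T_def)
  have fT: "finite T" using TX fX finite_subset by blast
  have Tedge: "\<forall>e\<in>E. card (e \<inter> T) \<ge> 2"
  proof
    fix e assume e: "e \<in> E"
    then have eX: "e \<subseteq> X" using h by (simp add: hypergraph_def)
    obtain x y where "x \<in> e" "y \<in> e" "x \<noteq> y" "\<phi> x = \<phi> y"
      using phi e unfolding C_coloring_def by blast
    then have sub: "{x, y} \<subseteq> e \<inter> T" using eX unfolding T_def by auto
    have "finite (e \<inter> T)" using fT by simp
    from card_mono[OF this sub] \<open>x \<noteq> y\<close> show "card (e \<inter> T) \<ge> 2" by simp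
  qed
  have t: "tau2 X E \<le> card T"
    unfolding tau2_def using Tedge TX by (intro Min_le[OF tau_set(1)[OF h]]) blast
  have fib: "card T = (\<Sum>c\<in>\<phi> ` T. card {x\<in>T. \<phi> x = c})"
  proof -
    have "T = (\<Union>c\<in>\<phi> ` T. {x\<in>T. \<phi> x = c})" by auto
    then have "card T = card (\<Union>c\<in>\<phi> ` T. {x\<in>T. \<phi> x = c})" by simp
    also have "\<dots> = (\<Sum>c\<in>\<phi> ` T. card {x\<in>T. \<phi> x = c})"
      by (rule card_UN_disjoint) (use fT in auto)
    finally show ?thesis .
  qed
  have "(\<Sum>c\<in>\<phi> ` T. (2::nat)) \<le> (\<Sum>c\<in>\<phi> ` T. card {x\<in>T. \<phi> x = c})"
  proof (rule sum_mono)
    fix c assume "c \<in> \<phi> ` T"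
    then obtain x where x: "x \<in> T" "\<phi> x = c" by auto
    then obtain y where y: "y \<in> X" "y \<noteq> x" "\<phi> y = \<phi> x" unfolding T_def by auto
    have "y \<in> T" using y x TX unfolding T_def by auto
    then have sub: "{x, y} \<subseteq> {x\<in>T. \<phi> x = c}" using x y by auto
    have "finite {x\<in>T. \<phi> x = c}" using fT by simp
    from card_mono[OF this sub] y show "2 \<le> card {x\<in>T. \<phi> x = c}" by simp
  qed
  then have c2: "2 * card (\<phi> ` T) \<le> card T" using fib by simp
  have inj: "inj_on \<phi> (X - T)"
    unfolding inj_on_def T_def by auto
  have disj: "\<phi> ` T \<inter> \<phi> ` (X - T) = {}"
  proof (rule ccontr)
    assume "\<phi> ` T \<inter> \<phi> ` (X - T) \<noteq> {}"
    then obtain x y where "x \<in> T" "y \<in> X - T" "\<phi> x = \<phi> y" by auto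
    then show False unfolding T_def by (metis (mono_tags, lifting) DiffD1 DiffD2 mem_Collect_eq)
  qed
  have "\<phi> ` X = \<phi> ` T \<union> \<phi> ` (X - T)" using TX by auto
  then have k: "card (\<phi> ` X) = card (\<phi> ` T) + card (X - T)"
    using card_Un_disjoint[OF finite_imageI[OF fT] finite_imageI disj] fX
      card_image[OF inj] by simp
  have n: "card X = card T + card (X - T)"
    using card_Un_disjoint[of T "X - T"] fT fX TX
    by (metis Un_Diff_cancel Un_absorb1 Diff_disjoint finite_Diff)
  show ?thesis unfolding dec_def using chi k n c2 t by linarith
qed

lemma upper:
  assumes h: "hypergraph X E"
  shows "dec X E + 1 \<le> tau2 X E" "tau2 X E \<ge> 2"
proof -
  have fX: "finite X" using h by (simp add: hypergraph_def)
  obtain T where TX: "T \<subseteq> X" and Tedge: "\<forall>e\<in>E. card (e \<inter> T) \<ge> 2"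
    and t: "tau2 X E = card T"
    using Min_in[OF tau_set[OF h]] unfolding tau2_def by auto
  have fT: "finite T" using TX fX finite_subset by blast
  obtain e where e: "e \<in> E" using h by (auto simp: hypergraph_def)
  have "card (e \<inter> T) \<le> card T" using fT by (simp add: card_mono)
  then show t2: "tau2 X E \<ge> 2" using Tedge e t by fastforce
  then have Tne: "T \<noteq> {}" using t by auto
  obtain f :: "'a \<Rightarrow> nat" and m where f: "inj_on f X"
    using finite_imp_inj_to_nat_seg[OF fX] by blast
  define \<phi> where "\<phi> x = (if x \<in> T then 0 else Suc (f x))" for x
  have col: "C_coloring E \<phi>"
  proof (unfold C_coloring_def, intro ballI)
    fix e assume "e \<in> E"
    then have "card (e \<inter> T) \<ge> 2" using Tedge by auto
    then obtain x y where "x \<in> e \<inter> T" "y \<in> e \<inter> T" "x \<noteq> y"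
      by (metis card_2_iff' card_le_Suc_iff numeral_2_eq_2 insertCI)
    then show "\<exists>x\<in>e. \<exists>y\<in>e. x \<noteq> y \<and> \<phi> x = \<phi> y" unfolding \<phi>_def by auto
  qed
  have img: "\<phi> ` X = insert 0 (\<phi> ` (X - T))" using TX Tne unfolding \<phi>_def by auto
  have inj: "inj_on \<phi> (X - T)" using f unfolding \<phi>_def inj_on_def by auto
  have "0 \<notin> \<phi> ` (X - T)" unfolding \<phi>_def by auto
  then have "card (\<phi> ` X) = Suc (card (X - T))"
    using img card_image[OF inj] fX by simp
  moreover have "card (\<phi> ` X) \<le> upper_chi X E"
    unfolding upper_chi_def using col by (intro Max_ge[OF chi_set(1)[OF h]]) blast
  moreover have "card (X - T) = card X - card T" using card_Diff_subset[OF fT TX] .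
  moreover have "card T \<le> card X" using card_mono[OF fX TX] .
  ultimately show "dec X E + 1 \<le> tau2 X E" unfolding dec_def using t t2 by linarith
qed

lemma example:
  shows "hypergraph {0::nat,1} {{0,1}}" "tau2 {0::nat,1} {{0,1}} = 2"
    "dec {0::nat,1} {{0,1}} = 1"
proof -
  show "hypergraph {0::nat,1} {{0,1}}" by (simp add: hypergraph_def)
  have "{card T | T. T \<subseteq> {0::nat,1} \<and> (\<forall>e\<in>{{0,1}}. card (e \<inter> T) \<ge> 2)} = {2}"
  proof safe
    fix T :: "nat set" assume "T \<subseteq> {0,1}" "\<forall>e\<in>{{0::nat,1}}. 2 \<le> card (e \<inter> T)"
    then have "card T \<ge> 2" "card T \<le> 2"
      using card_mono[of "{0::nat,1}" T] by (auto simp: Int_absorb1)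
    then show "card T = 2" by simp
  next
    show "\<exists>T. 2 = card T \<and> T \<subseteq> {0::nat, 1} \<and> (\<forall>e\<in>{{0, 1}}. 2 \<le> card (e \<inter> T))"
      by (intro exI[of _ "{0::nat,1}"]) auto
  qed
  then show "tau2 {0::nat,1} {{0,1}} = 2" unfolding tau2_def by simp
  have "{card (\<phi> ` {0::nat,1}) | \<phi>. C_coloring {{0::nat,1}} \<phi>} = {1}"
  proof safe
    fix \<phi> :: "nat \<Rightarrow> nat" assume "C_coloring {{0::nat,1}} \<phi>"
    then have "\<phi> 0 = \<phi> 1" unfolding C_coloring_def by auto
    then show "card (\<phi> ` {0::nat,1}) = 1" by simp
  next
    show "\<exists>\<phi>. 1 = card (\<phi> ` {0::nat, 1}) \<and> C_coloring {{0, 1}} \<phi>"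
      by (intro exI[of _ "\<lambda>_. 0"]) (auto simp: C_coloring_def)
  qed
  then show "dec {0::nat,1} {{0,1}} = 1" unfolding dec_def upper_chi_def by simp
qed

theorem proposition1:
  shows "(\<forall>(X::'a set) E. hypergraph X E \<longrightarrow>
            real (tau2 X E) / 2 \<le> real (dec X E) \<and> real (dec X E) \<le> real (tau2 X E) - 1)
       \<and> (\<exists>(X::nat set) E. hypergraph X E \<and> real (tau2 X E) / 2 = real (dec X E))
       \<and> (\<exists>(X::nat set) E. hypergraph X E \<and> real (dec X E) = real (tau2 X E) - 1)"
proof (intro conjI allI impI)
  fix X :: "'a set" and E assume h: "hypergraph X E"
  from lower[OF h] show "real (tau2 X E) / 2 \<le> real (dec X E)" by linarith
  from upper(1)[OF h] show "real (dec X E) \<le> real (tau2 X E) - 1" by linarith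
next
  show "\<exists>(X::nat set) E. hypergraph X E \<and> real (tau2 X E) / 2 = real (dec X E)"
    using example by (intro exI[of _ "{0::nat,1}"] exI[of _ "{{0,1}}"]) simp
next
  show "\<exists>(X::nat set) E. hypergraph X E \<and> real (dec X E) = real (tau2 X E) - 1"
    using example by (intro exI[of _ "{0::nat,1}"] exI[of _ "{{0,1}}"]) simp
qed

end
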